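(* If $Q \subset M_\mathbb{R}$ is a lattice polytope that is not $2$-normal, then $\Sigma_Q$ is a proper subset of $P_Q$.
   Context: Let $M$ be an $m$-dimensional affine lattice, $M_\mathbb{R}:=M\otimes_\mathbb{Z}\mathbb{R}$, and $\mathbb{R}[M]$ the group ring (Laurent polynomials). For $f=\sum c_{\mathbf u}z^{\mathbf u}$, $\operatorname{New}(f):=\operatorname{conv}\{\mathbf u: c_{\mathbf u}\ne 0\}$, and $f\ge 0$ means $f$ is nonnegative at every real point of the torus $T=\operatorname{Spec}(\mathbb{R}[M])$. For an $m$-dimensional lattice polytope $Q\subset M_\mathbb{R}$, set $P_Q:=\{f\in\mathbb{R}[M]: \operatorname{New}(f)\subseteq 2Q,\ f\ge 0\}$ and $\Sigma_Q:=\{f = g_1^2+\dotsb+g_k^2 : g_j\in\mathbb{R}[M],\ \operatorname{New}(g_j)\subseteq Q\}$. $Q$ is $2$-normal if every lattice point of $2Q$ is a sum of two lattice points of $Q$. *)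

theory Defs
  imports "HOL-Analysis.Analysis"
begin

text \<open>The affine lattice M is identified with int^'n (m = CARD('n)), and
M_R with real^'n. A Laurent polynomial in R[M] is a finitely supported
coefficient function int^'n => real.\<close>

definition laurent :: "(int^'n \<Rightarrow> real) set" where
  "laurent = {c. finite {u. c u \<noteq> 0}}"

definition lsupp :: "(int^'n \<Rightarrow> real) \<Rightarrow> (int^'n) set" where
  "lsupp c = {u. c u \<noteq> 0}"

definition lat_pt :: "int^'n \<Rightarrow> real^'n" where
  "lat_pt u = (\<chi> i. real_of_int (u $ i))"

definition newton :: "(int^'n \<Rightarrow> real) \<Rightarrow> (real^'n) set" where
  "newton c = convex hull (lat_pt ` lsupp c)"

text \<open>Evaluation at a point of the real torus (all coordinates nonzero).\<close>
definition leval :: "(int^'n \<Rightarrow> real) \<Rightarrow> real^'n \<Rightarrow> real" where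
  "leval c x = (\<Sum>u\<in>lsupp c. c u * (\<Prod>i\<in>UNIV. (x $ i) powi (u $ i)))"

definition lnonneg :: "(int^'n \<Rightarrow> real) \<Rightarrow> bool" where
  "lnonneg c \<longleftrightarrow> (\<forall>x::real^'n. (\<forall>i. x $ i \<noteq> 0) \<longrightarrow> 0 \<le> leval c x)"

definition lmult :: "(int^'n \<Rightarrow> real) \<Rightarrow> (int^'n \<Rightarrow> real) \<Rightarrow> (int^'n \<Rightarrow> real)" where
  "lmult g h = (\<lambda>u. \<Sum>v\<in>lsupp g. g v * h (u - v))"

definition lattice_polytope :: "(real^'n) set \<Rightarrow> bool" where
  "lattice_polytope Q \<longleftrightarrow> (\<exists>S. finite S \<and> S \<subseteq> range lat_pt \<and> Q = convex hull S)"

definition PQ :: "(real^'n) set \<Rightarrow> (int^'n \<Rightarrow> real) set" where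
  "PQ Q = {f \<in> laurent. newton f \<subseteq> (\<lambda>x. (2::real) *\<^sub>R x) ` Q \<and> lnonneg f}"

definition SigmaQ :: "(real^'n) set \<Rightarrow> (int^'n \<Rightarrow> real) set" where
  "SigmaQ Q = {f. \<exists>(k::nat) (g::nat \<Rightarrow> int^'n \<Rightarrow> real).
      (\<forall>j<k. g j \<in> laurent \<and> newton (g j) \<subseteq> Q) \<and>
      f = (\<lambda>u. \<Sum>j<k. lmult (g j) (g j) u)}"

definition two_normal :: "(real^'n) set \<Rightarrow> bool" where
  "two_normal Q \<longleftrightarrow> (\<forall>u. lat_pt u \<in> (\<lambda>x. (2::real) *\<^sub>R x) ` Q \<longrightarrow>
      (\<exists>v w. lat_pt v \<in> Q \<and> lat_pt w \<in> Q \<and> u = v + w))"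

end

theory Submission
  imports Defs
begin

definition mono :: "real^'n \<Rightarrow> int^'n \<Rightarrow> real" where
  "mono x u = (\<Prod>i\<in>UNIV. (x $ i) powi (u $ i))"

lemma leval_eq:
  assumes "finite A" "lsupp c \<subseteq> A"
  shows "leval c x = (\<Sum>t\<in>A. c t * mono x t)"
  unfolding leval_def mono_def
  by (rule sum.mono_neutral_left) (use assms in \<open>auto simp: lsupp_def\<close>)

lemma mono_add:
  assumes "\<forall>i. x $ i \<noteq> 0"
  shows "mono x (v + w) = mono x v * mono x w"
  using assms by (simp add: mono_def power_int_add prod.distrib)

lemma lat_pt_add: "lat_pt (v + w) = lat_pt v + lat_pt w"
  by (simp add: lat_pt_def vec_eq_iff)

lemma inj_lat_pt: "inj lat_pt"
  by (auto simp: inj_def lat_pt_def vec_eq_iff)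

lemma lsupp_lmult:
  "lsupp (lmult g h) \<subseteq> (\<lambda>(v,w). v + w) ` (lsupp g \<times> lsupp h)"
proof
  fix u assume "u \<in> lsupp (lmult g h)"
  hence "(\<Sum>v\<in>lsupp g. g v * h (u - v)) \<noteq> 0" by (simp add: lsupp_def lmult_def)
  then obtain v where v: "v \<in> lsupp g" "g v * h (u - v) \<noteq> 0"
    by (meson sum.neutral)
  hence "u - v \<in> lsupp h" by (simp add: lsupp_def)
  moreover have "u = v + (u - v)" by simp
  ultimately show "u \<in> (\<lambda>(v,w). v + w) ` (lsupp g \<times> lsupp h)"
    using v(1) by force
qed

lemma laurent_fin: "c \<in> laurent \<Longrightarrow> finite (lsupp c)"
  by (simp add: laurent_def lsupp_def)

lemma lmult_laurent:
  assumes "g \<in> laurent" "h \<in> laurent"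
  shows "lmult g h \<in> laurent"
proof -
  have "finite ((\<lambda>(v,w). v + w) ` (lsupp g \<times> lsupp h))"
    using assms by (simp add: laurent_fin)
  hence "finite (lsupp (lmult g h))" using lsupp_lmult finite_subset by blast
  thus ?thesis by (simp add: laurent_def lsupp_def)
qed

lemma leval_lmult:
  assumes g: "g \<in> laurent" and h: "h \<in> laurent" and x: "\<forall>i. x $ i \<noteq> 0"
  shows "leval (lmult g h) x = leval g x * leval h x"
proof -
  define G where "G = lsupp g"
  define H where "H = lsupp h"
  define A where "A = (\<lambda>(v,w). v + w) ` (G \<times> H)"
  have fG: "finite G" and fH: "finite H" using g h by (auto simp: G_def H_def laurent_fin)
  have fA: "finite A" using fG fH by (simp add: A_def)
  have inner: "(\<Sum>t\<in>A. h (t - v) * mono x t) = mono x v * leval h x" if v: "v \<in> G" for v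
  proof -
    have sub: "(\<lambda>w. v + w) ` H \<subseteq> A" using v by (auto simp: A_def)
    have "(\<Sum>t\<in>A. h (t - v) * mono x t) = (\<Sum>t\<in>(\<lambda>w. v + w) ` H. h (t - v) * mono x t)"
    proof (rule sum.mono_neutral_right[OF fA sub], rule ballI)
      fix t assume "t \<in> A - (\<lambda>w. v + w) ` H"
      hence "t - v \<notin> H" by (metis DiffD2 add_diff_cancel_left' diff_add_cancel image_eqI add.commute)
      thus "h (t - v) * mono x t = 0" by (simp add: H_def lsupp_def)
    qed
    also have "\<dots> = (\<Sum>w\<in>H. h w * mono x (v + w))"
      by (subst sum.reindex) (auto simp: inj_on_def)
    also have "\<dots> = mono x v * (\<Sum>w\<in>H. h w * mono x w)"
      by (simp add: mono_add[OF x] sum_distrib_left algebra_simps)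
    also have "\<dots> = mono x v * leval h x"
      by (simp add: leval_eq[OF fH] H_def)
    finally show ?thesis .
  qed
  have "leval (lmult g h) x = (\<Sum>t\<in>A. lmult g h t * mono x t)"
    by (rule leval_eq[OF fA]) (use lsupp_lmult in \<open>simp add: A_def G_def H_def\<close>)
  also have "\<dots> = (\<Sum>t\<in>A. \<Sum>v\<in>G. g v * (h (t - v) * mono x t))"
    by (simp add: lmult_def G_def sum_distrib_right mult.assoc)
  also have "\<dots> = (\<Sum>v\<in>G. g v * (\<Sum>t\<in>A. h (t - v) * mono x t))"
    by (subst sum.swap) (simp add: sum_distrib_left)
  also have "\<dots> = (\<Sum>v\<in>G. g v * (mono x v * leval h x))"
    by (rule sum.cong) (simp_all add: inner)
  also have "\<dots> = leval g x * leval h x"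
    by (simp add: leval_eq[OF fG] G_def sum_distrib_right mult.assoc)
  finally show ?thesis .
qed

lemma leval_sum:
  fixes k :: nat
  assumes "\<And>j. j < k \<Longrightarrow> F j \<in> laurent"
  shows "leval (\<lambda>u. \<Sum>j<k. F j u) x = (\<Sum>j<k. leval (F j) x)"
proof -
  define A where "A = (\<Union>j<k. lsupp (F j))"
  have fA: "finite A" unfolding A_def by (rule finite_UN_I) (auto intro: laurent_fin assms)
  have sub: "lsupp (\<lambda>u. \<Sum>j<k. F j u) \<subseteq> A"
  proof
    fix u assume "u \<in> lsupp (\<lambda>u. \<Sum>j<k. F j u)"
    hence "(\<Sum>j<k. F j u) \<noteq> 0" by (simp add: lsupp_def)
    then obtain j where "j < k" "F j u \<noteq> 0" by (meson lessThan_iff sum.neutral)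
    thus "u \<in> A" by (auto simp: A_def lsupp_def)
  qed
  have "leval (\<lambda>u. \<Sum>j<k. F j u) x = (\<Sum>t\<in>A. (\<Sum>j<k. F j t) * mono x t)"
    by (rule leval_eq[OF fA sub])
  also have "\<dots> = (\<Sum>j<k. \<Sum>t\<in>A. F j t * mono x t)"
    by (simp add: sum_distrib_right) (rule sum.swap)
  also have "\<dots> = (\<Sum>j<k. leval (F j) x)"
    by (rule sum.cong[OF refl], rule leval_eq[OF fA, symmetric]) (auto simp: A_def)
  finally show ?thesis .
qed

lemma newton_sub: "lat_pt ` lsupp c \<subseteq> D \<Longrightarrow> convex D \<Longrightarrow> newton c \<subseteq> D"
  by (simp add: newton_def hull_minimal)

lemma lsupp_newton: "v \<in> lsupp c \<Longrightarrow> lat_pt v \<in> newton c"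
  by (simp add: newton_def hull_inc)

lemma two_sum:
  assumes "convex Q" "a \<in> Q" "b \<in> Q"
  shows "a + b \<in> (\<lambda>x. (2::real) *\<^sub>R x) ` Q"
proof -
  have "(1/2) *\<^sub>R a + (1/2) *\<^sub>R b \<in> Q"
    using assms by (intro convexD) auto
  moreover have "a + b = 2 *\<^sub>R ((1/2) *\<^sub>R a + (1/2) *\<^sub>R b)"
    by (simp add: scaleR_add_right)
  ultimately show ?thesis by blast
qed

lemma Sigma_sub:
  assumes cQ: "convex Q"
  shows "SigmaQ Q \<subseteq> PQ Q"
proof
  fix f assume "f \<in> SigmaQ Q"
  then obtain k :: nat and g where g: "\<forall>j<k. g j \<in> laurent \<and> newton (g j) \<subseteq> Q"
    and f: "f = (\<lambda>u. \<Sum>j<k. lmult (g j) (g j) u)"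
    unfolding SigmaQ_def mem_Collect_eq by (elim exE conjE) (erule (1) that)
  have Fl: "lmult (g j) (g j) \<in> laurent" if "j < k" for j
    using g that by (simp add: lmult_laurent)
  define A where "A = (\<Union>j<k. lsupp (lmult (g j) (g j)))"
  have fA: "finite A" unfolding A_def by (rule finite_UN_I) (auto intro: laurent_fin Fl)
  have sub: "lsupp f \<subseteq> A"
  proof
    fix u assume "u \<in> lsupp f"
    hence "(\<Sum>j<k. lmult (g j) (g j) u) \<noteq> 0" by (simp add: lsupp_def f)
    then obtain j where "j < k" "lmult (g j) (g j) u \<noteq> 0" by (meson lessThan_iff sum.neutral)
    thus "u \<in> A" by (auto simp: A_def lsupp_def)
  qed
  have lf: "f \<in> laurent"
    using finite_subset[OF sub fA] by (simp add: laurent_def lsupp_def)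
  have cQ2: "convex ((\<lambda>x. (2::real) *\<^sub>R x) ` Q)" using cQ by (rule convex_scaling)
  have "lat_pt ` A \<subseteq> (\<lambda>x. (2::real) *\<^sub>R x) ` Q"
  proof
    fix p assume "p \<in> lat_pt ` A"
    then obtain j u where j: "j < k" and u: "u \<in> lsupp (lmult (g j) (g j))" and p: "p = lat_pt u"
      by (auto simp: A_def)
    then obtain v w where "v \<in> lsupp (g j)" "w \<in> lsupp (g j)" "u = v + w"
      using subsetD[OF lsupp_lmult[of "g j" "g j"] u] by auto
    hence "lat_pt v \<in> Q" "lat_pt w \<in> Q" using g j lsupp_newton by blast+
    thus "p \<in> (\<lambda>x. (2::real) *\<^sub>R x) ` Q"
      using two_sum[OF cQ] \<open>u = v + w\<close> p by (simp add: lat_pt_add)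
  qed
  hence newt: "newton f \<subseteq> (\<lambda>x. (2::real) *\<^sub>R x) ` Q"
    using sub cQ2 by (intro newton_sub) auto
  have "lnonneg f"
    unfolding lnonneg_def
  proof (intro allI impI)
    fix x :: "real^'a" assume x: "\<forall>i. x $ i \<noteq> 0"
    have "leval f x = (\<Sum>j<k. leval (lmult (g j) (g j)) x)"
      unfolding f by (rule leval_sum) (rule Fl)
    also have "\<dots> = (\<Sum>j<k. (leval (g j) x)^2)"
      using g x by (intro sum.cong) (auto simp: leval_lmult power2_eq_square)
    finally show "0 \<le> leval f x" by (simp add: sum_nonneg)
  qed
  thus "f \<in> PQ Q" using lf newt by (simp add: PQ_def)
qed

lemma abs_mono_exp:
  assumes x: "\<forall>i. x $ i \<noteq> 0"
  shows "\<bar>mono x w\<bar> = exp (\<Sum>i\<in>UNIV. real_of_int (w $ i) * ln \<bar>x $ i\<bar>)"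
proof -
  have "\<bar>mono x w\<bar> = (\<Prod>i\<in>UNIV. \<bar>x $ i\<bar> powi (w $ i))"
    by (simp add: mono_def abs_prod power_int_abs)
  also have "\<dots> = (\<Prod>i\<in>UNIV. exp (real_of_int (w $ i) * ln \<bar>x $ i\<bar>))"
  proof (rule prod.cong[OF refl])
    fix i
    have "\<bar>x $ i\<bar> powi (w $ i) = \<bar>x $ i\<bar> powr real_of_int (w $ i)"
      using x by (subst powr_real_of_int') auto
    also have "\<dots> = exp (real_of_int (w $ i) * ln \<bar>x $ i\<bar>)"
      using x by (simp add: powr_def mult.commute)
    finally show "\<bar>x $ i\<bar> powi (w $ i) = exp (real_of_int (w $ i) * ln \<bar>x $ i\<bar>)" .
  qed
  also have "\<dots> = exp (\<Sum>i\<in>UNIV. real_of_int (w $ i) * ln \<bar>x $ i\<bar>)"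
    by (simp add: exp_sum)
  finally show ?thesis .
qed

lemma amgm_key:
  fixes L :: "(int^'n) set" and x :: "real^'n"
  assumes x: "\<forall>i. x $ i \<noteq> 0" and fL: "finite L"
    and mu0: "\<And>w. w \<in> L \<Longrightarrow> 0 \<le> mu w" and mu1: "sum mu L = 1"
    and comb: "(\<Sum>w\<in>L. mu w *\<^sub>R (2 *\<^sub>R lat_pt w)) = lat_pt u"
  shows "\<bar>mono x u\<bar> \<le> (\<Sum>w\<in>L. mu w * (mono x w)^2)"
proof -
  define l where "l = (\<lambda>p::real^'n. \<Sum>i\<in>UNIV. p $ i * ln \<bar>x $ i\<bar>)"
  have lw: "\<bar>mono x w\<bar> = exp (l (lat_pt w))" for w
    using abs_mono_exp[OF x] by (simp add: l_def lat_pt_def)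
  have lin: "l (\<Sum>w\<in>L. mu w *\<^sub>R (2 *\<^sub>R lat_pt w)) = (\<Sum>w\<in>L. mu w * (2 * l (lat_pt w)))"
    unfolding l_def
    by (simp add: sum_component sum_distrib_right sum_distrib_left mult.assoc) (rule sum.swap)
  have ne: "L \<noteq> {}" using mu1 by auto
  have "\<bar>mono x u\<bar> = exp (\<Sum>w\<in>L. mu w * (2 * l (lat_pt w)))"
    using lw[of u] comb lin by simp
  also have "\<dots> \<le> (\<Sum>w\<in>L. mu w * exp (2 * l (lat_pt w)))"
    using convex_on_sum[where y="\<lambda>w. 2 * l (lat_pt w)", OF fL ne exp_convex mu1] mu0 by simp
  also have "\<dots> = (\<Sum>w\<in>L. mu w * (mono x w)^2)"
  proof (rule sum.cong[OF refl])
    fix w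
    have "exp (2 * l (lat_pt w)) = (exp (l (lat_pt w)))^2"
      by (simp add: exp_double[symmetric] power2_eq_square exp_add[symmetric])
    also have "\<dots> = (mono x w)^2" using lw[of w] by (metis power2_abs)
    finally show "mu w * exp (2 * l (lat_pt w)) = mu w * (mono x w)^2" by simp
  qed
  finally show ?thesis .
qed

theorem lemma6p2:
  fixes Q :: "(real^'n) set"
  assumes "lattice_polytope Q"
    and "aff_dim Q = int CARD('n)"
    and "\<not> two_normal Q"
  shows "SigmaQ Q \<subset> PQ Q"
proof -
  obtain S where fS: "finite S" and SL: "S \<subseteq> range lat_pt" and QS: "Q = convex hull S"
    using assms(1) by (auto simp: lattice_polytope_def)
  have cQ: "convex Q" by (simp add: QS)
  have SQ: "S \<subseteq> Q" by (simp add: QS hull_subset)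
  define D where "D = (\<lambda>x. (2::real) *\<^sub>R x) ` Q"
  have cD: "convex D" unfolding D_def using cQ by (rule convex_scaling)
  obtain u where uD: "lat_pt u \<in> D"
    and nsum: "\<And>v w. lat_pt v \<in> Q \<Longrightarrow> lat_pt w \<in> Q \<Longrightarrow> u \<noteq> v + w"
    using assms(3) unfolding two_normal_def D_def by blast
  define T where "T = (\<lambda>x. (2::real) *\<^sub>R x) ` S"
  have fT: "finite T" using fS by (simp add: T_def)
  have "lat_pt u \<in> convex hull T" using uD by (simp add: T_def D_def QS convex_hull_scaling)
  then obtain lam where lam0: "\<forall>y\<in>T. 0 \<le> lam y" and lam1: "sum lam T = 1"
    and lamc: "(\<Sum>y\<in>T. lam y *\<^sub>R y) = lat_pt u"
    using convex_hull_finite[OF fT] by auto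
  define L where "L = lat_pt -` S"
  have fL: "finite L" unfolding L_def by (rule finite_vimageI[OF fS inj_lat_pt])
  have LS: "lat_pt w \<in> S" if "w \<in> L" for w using that by (simp add: L_def)
  have TL: "T = (\<lambda>w. 2 *\<^sub>R lat_pt w) ` L"
  proof -
    have "lat_pt ` L = S" using SL by (auto simp: L_def image_vimage_eq)
    thus ?thesis by (auto simp: T_def image_image[symmetric])
  qed
  have injL: "inj_on (\<lambda>w. (2::real) *\<^sub>R lat_pt w) L"
    using inj_lat_pt by (auto simp: inj_on_def inj_def)
  define mu where "mu = (\<lambda>w. lam (2 *\<^sub>R lat_pt w))"
  have mu0: "0 \<le> mu w" if "w \<in> L" for w using lam0 that by (auto simp: mu_def TL)
  have mu1: "sum mu L = 1" using lam1 by (simp add: TL sum.reindex[OF injL] mu_def)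
  have muc: "(\<Sum>w\<in>L. mu w *\<^sub>R (2 *\<^sub>R lat_pt w)) = lat_pt u"
    using lamc by (simp add: TL sum.reindex[OF injL] mu_def)
  define f where "f = (\<lambda>t. (\<Sum>w\<in>L. if t = w + w then mu w else 0) + (if t = u then 1 else (0::real)))"
  define A where "A = insert u ((\<lambda>w. w + w) ` L)"
  have fA: "finite A" using fL by (simp add: A_def)
  have supp: "lsupp f \<subseteq> A"
  proof
    fix t assume "t \<in> lsupp f"
    hence "f t \<noteq> 0" by (simp add: lsupp_def)
    show "t \<in> A"
    proof (cases "t = u")
      case True thus ?thesis by (simp add: A_def)
    next
      case False
      hence "(\<Sum>w\<in>L. if t = w + w then mu w else 0) \<noteq> 0" using \<open>f t \<noteq> 0\<close> by (simp add: f_def)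
      then obtain w where "w \<in> L" "(if t = w + w then mu w else 0) \<noteq> 0"
        using sum.neutral[of L "\<lambda>w. if t = w + w then mu w else 0"] by blast
      thus ?thesis by (auto simp: A_def split: if_splits)
    qed
  qed
  have fu: "f u = 1"
  proof -
    have "(\<Sum>w\<in>L. if u = w + w then mu w else 0) = 0"
    proof (rule sum.neutral, rule ballI)
      fix w assume "w \<in> L"
      hence "lat_pt w \<in> Q" using LS SQ by blast
      hence "u \<noteq> w + w" using nsum by blast
      thus "(if u = w + w then mu w else 0) = 0" by simp
    qed
    thus ?thesis by (simp add: f_def)
  qed
  have notS: "f \<notin> SigmaQ Q"
  proof
    assume "f \<in> SigmaQ Q"
    then obtain k :: nat and g where g: "\<forall>j<k. g j \<in> laurent \<and> newton (g j) \<subseteq> Q"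
      and f: "f = (\<lambda>u. \<Sum>j<k. lmult (g j) (g j) u)"
      unfolding SigmaQ_def mem_Collect_eq by (elim exE conjE) (erule (1) that)
    have "lmult (g j) (g j) u = 0" if j: "j < k" for j
      unfolding lmult_def
    proof (rule sum.neutral, rule ballI)
      fix v assume v: "v \<in> lsupp (g j)"
      show "g j v * g j (u - v) = 0"
      proof (rule ccontr)
        assume "g j v * g j (u - v) \<noteq> 0"
        hence "u - v \<in> lsupp (g j)" by (simp add: lsupp_def)
        hence "lat_pt v \<in> Q" "lat_pt (u - v) \<in> Q"
          using v g j lsupp_newton by blast+
        thus False using nsum[of v "u - v"] by simp
      qed
    qed
    hence "f u = 0" by (simp add: f)
    thus False using fu by simp
  qed
  have lf: "f \<in> laurent"
    using finite_subset[OF supp fA] by (simp add: laurent_def lsupp_def)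
  have "lat_pt ` A \<subseteq> D"
  proof
    fix p assume "p \<in> lat_pt ` A"
    then obtain t where t: "t \<in> A" "p = lat_pt t" by auto
    show "p \<in> D"
    proof (cases "t = u")
      case True thus ?thesis using uD t by simp
    next
      case False
      then obtain w where "w \<in> L" "t = w + w" using t by (auto simp: A_def)
      hence "lat_pt w \<in> Q" using LS SQ by blast
      hence "lat_pt w + lat_pt w \<in> D" using two_sum[OF cQ \<open>lat_pt w \<in> Q\<close> \<open>lat_pt w \<in> Q\<close>] by (simp only: D_def)
      thus ?thesis using \<open>t = w + w\<close> t by (simp only: lat_pt_add)
    qed
  qed
  hence newt: "newton f \<subseteq> D" using supp cD by (intro newton_sub) auto
  have "lnonneg f"
    unfolding lnonneg_def
  proof (intro allI impI)
    fix x :: "real^'n" assume x: "\<forall>i. x $ i \<noteq> 0"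
    have "leval f x = (\<Sum>t\<in>A. f t * mono x t)" by (rule leval_eq[OF fA supp])
    also have "\<dots> = (\<Sum>w\<in>L. \<Sum>t\<in>A. (if t = w + w then mu w else 0) * mono x t)
                    + (\<Sum>t\<in>A. (if t = u then 1 else 0) * mono x t)"
      unfolding f_def by (simp add: sum.distrib sum_distrib_right distrib_right) (rule sum.swap)
    also have "\<dots> = (\<Sum>w\<in>L. mu w * mono x (w + w)) + mono x u"
    proof -
      have "(\<Sum>t\<in>A. (if t = w + w then mu w else 0) * mono x t) = mu w * mono x (w + w)"
        if "w \<in> L" for w
      proof -
        have "w + w \<in> A" using that by (simp add: A_def)
        have "(\<Sum>t\<in>A. (if t = w + w then mu w else 0) * mono x t)
            = (\<Sum>t\<in>A. if t = w + w then mu w * mono x t else 0)"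
          by (rule sum.cong) auto
        also have "\<dots> = mu w * mono x (w + w)"
          using sum.delta[OF fA, of "w + w" "\<lambda>t. mu w * mono x t"] \<open>w + w \<in> A\<close>
          by (simp add: eq_commute)
        finally show ?thesis .
      qed
      moreover have "(\<Sum>t\<in>A. (if t = u then 1 else 0) * mono x t) = mono x u"
      proof -
        have "(\<Sum>t\<in>A. (if t = u then 1 else 0) * mono x t)
            = (\<Sum>t\<in>A. if t = u then mono x t else 0)"
          by (rule sum.cong) auto
        also have "\<dots> = mono x u"
          using sum.delta[OF fA, of u "\<lambda>t. mono x t"] by (simp add: A_def eq_commute)
        finally show ?thesis .
      qed
      ultimately show ?thesis by simp
    qed
    also have "\<dots> = (\<Sum>w\<in>L. mu w * (mono x w)^2) + mono x u"
      by (rule arg_cong2[where f="(+)"], rule sum.cong, simp_all only: mono_add[OF x] power2_eq_square)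
    finally show "0 \<le> leval f x"
      using amgm_key[OF x fL mu0 mu1 muc] by linarith
  qed
  hence "f \<in> PQ Q" using lf newt by (simp add: PQ_def D_def)
  thus ?thesis using Sigma_sub[OF cQ] notS by blast
qed

end
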